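(* Let $L$ be a finite, bounded, simple, relatively complemented lattice. Then every tolerance on $L$ is transitive (hence a congruence), the only tolerances on $L$ are $\mathrm{id}_L$ and $L^2$, and consequently $\mathsf{C}(L)=\mathsf{Pol}_{0,1}(L)$.
   Context: A tolerance on $L$ is a reflexive, symmetric binary relation $T$ such that $(a,b),(c,d)\in T$ imply $(a\vee c,b\vee d),(a\wedge c,b\wedge d)\in T$; a congruence is a transitive tolerance. $L$ is simple if its only congruences are $\mathrm{id}_L=\{(x,x):x\in L\}$ and $L^2$. $L$ is relatively complemented if for every $a\le b$ and every $x\in[a,b]$ there is $y\in[a,b]$ with $x\wedge y=a$, $x\vee y=b$. An $n$-ary aggregation function on $L$ ($n\ge1$) is a nondecreasing map $A:L^n\to L$ with $A(0,\dots,0)=0$, $A(1,\dots,1)=1$; $\mathsf{C}(L)$ is the set of all of them. Polynomials on $L$ are functions $L^n\to L$ built from projections and constants by finitely many pointwise joins and meets; $\mathsf{Pol}_{0,1}(L)$ is the set of polynomials preserving $0$ and $1$. *)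

theory Defs
  imports Main
begin

definition tolerance :: "('a::lattice \<times> 'a) set \<Rightarrow> bool" where
  "tolerance T \<longleftrightarrow> refl T \<and> sym T \<and>
     (\<forall>a b c d. (a, b) \<in> T \<longrightarrow> (c, d) \<in> T \<longrightarrow>
        (sup a c, sup b d) \<in> T \<and> (inf a c, inf b d) \<in> T)"

definition congruence :: "('a::lattice \<times> 'a) set \<Rightarrow> bool" where
  "congruence T \<longleftrightarrow> tolerance T \<and> trans T"

definition simple_lattice :: "'a::lattice itself \<Rightarrow> bool" where
  "simple_lattice _ \<longleftrightarrow> (\<forall>T :: ('a \<times> 'a) set. congruence T \<longrightarrow> T = Id \<or> T = UNIV)"

definition relatively_complemented :: "'a::lattice itself \<Rightarrow> bool" where
  "relatively_complemented _ \<longleftrightarrow>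
     (\<forall>a b x :: 'a. a \<le> b \<longrightarrow> a \<le> x \<longrightarrow> x \<le> b \<longrightarrow>
        (\<exists>y. a \<le> y \<and> y \<le> b \<and> inf x y = a \<and> sup x y = b))"

text \<open>n-ary functions are modelled as maps functions with a finite
  (nonempty) index type 'n of cardinality n; the order on 'n \<Rightarrow> 'a is pointwise.\<close>
definition aggregation :: "(('n::finite \<Rightarrow> 'a) \<Rightarrow> 'a::bounded_lattice) \<Rightarrow> bool" where
  "aggregation A \<longleftrightarrow> mono A \<and> A (\<lambda>_. bot) = bot \<and> A (\<lambda>_. top) = top"

inductive_set polynomials :: "(('n \<Rightarrow> 'a) \<Rightarrow> 'a::lattice) set" where
  proj: "(\<lambda>x. x i) \<in> polynomials"
| const: "(\<lambda>x. c) \<in> polynomials"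
| join: "p \<in> polynomials \<Longrightarrow> q \<in> polynomials \<Longrightarrow> (\<lambda>x. sup (p x) (q x)) \<in> polynomials"
| meet: "p \<in> polynomials \<Longrightarrow> q \<in> polynomials \<Longrightarrow> (\<lambda>x. inf (p x) (q x)) \<in> polynomials"

definition Pol01 :: "(('n::finite \<Rightarrow> 'a) \<Rightarrow> 'a::bounded_lattice) set" where
  "Pol01 = {p \<in> polynomials. p (\<lambda>_. bot) = bot \<and> p (\<lambda>_. top) = top}"

end

theory Submission
  imports Defs
begin

lemma tol_facts:
  assumes "tolerance (T :: ('a::lattice \<times> 'a) set)"
  shows "\<And>a. (a,a) \<in> T" "\<And>a b. (a,b) \<in> T \<Longrightarrow> (b,a) \<in> T"
    "\<And>a b c d. (a,b) \<in> T \<Longrightarrow> (c,d) \<in> T \<Longrightarrow> (sup a c, sup b d) \<in> T"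
    "\<And>a b c d. (a,b) \<in> T \<Longrightarrow> (c,d) \<in> T \<Longrightarrow> (inf a c, inf b d) \<in> T"
  using assms unfolding tolerance_def refl_on_def sym_def by blast+

lemma tol_conv:
  assumes T: "tolerance (T :: ('a::lattice \<times> 'a) set)"
    and ab: "(a,b) \<in> T" and "a \<le> u" "a \<le> v" "u \<le> b" "v \<le> b"
  shows "(u,v) \<in> T"
proof -
  note f = tol_facts[OF T]
  have "(sup a u, sup b u) \<in> T" using f(3)[OF ab f(1)] .
  hence 1: "(u, b) \<in> T" using assms by (simp add: sup_absorb2 sup_absorb1)
  have "(sup b v, sup a v) \<in> T" using f(3)[OF f(2)[OF ab] f(1)] .
  hence 2: "(b, v) \<in> T" using assms by (simp add: sup_absorb2 sup_absorb1)
  have "(inf u b, inf b v) \<in> T" using f(4)[OF 1 2] .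
  thus ?thesis using assms by (simp add: inf_absorb1 inf_absorb2)
qed

lemma tol_chain:
  assumes RC: "relatively_complemented TYPE('a::lattice)"
    and T: "tolerance (T :: ('a \<times> 'a) set)"
    and "a \<le> b" "b \<le> c" and ab: "(a,b) \<in> T" and bc: "(b,c) \<in> T"
  shows "(a,c) \<in> T"
proof -
  note f = tol_facts[OF T]
  obtain y where y: "a \<le> y" "y \<le> c" "inf b y = a" "sup b y = c"
  proof -
    have "a \<le> c" using assms(3,4) by (rule order_trans)
    thus ?thesis using RC assms(3,4) that unfolding relatively_complemented_def by blast
  qed
  have "(inf b y, inf c y) \<in> T" using f(4)[OF bc f(1)] .
  hence ay: "(a, y) \<in> T" using y by (simp add: inf_absorb2)
  have "(sup a a, sup b y) \<in> T" using f(3)[OF ab ay] .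
  thus ?thesis using y by simp
qed

lemma tol_hull:
  assumes RC: "relatively_complemented TYPE('a::lattice)"
    and T: "tolerance (T :: ('a \<times> 'a) set)"
    and xy: "(x,y) \<in> T"
  shows "(inf x y, sup x y) \<in> T"
proof -
  note f = tol_facts[OF T]
  have "(inf x x, inf y x) \<in> T" using f(4)[OF xy f(1)] .
  hence mx: "(inf x y, x) \<in> T" using f(2) by (simp add: inf_commute)
  have xj: "(x, sup x y) \<in> T" using f(3)[OF f(1)[of x] xy] by simp
  obtain x' where x': "inf x y \<le> x'" "x' \<le> sup x y" "inf x x' = inf x y" "sup x x' = sup x y"
  proof -
    have "inf x y \<le> sup x y" by (meson inf_le1 order_trans sup_ge1)
    moreover have "inf x y \<le> x" "x \<le> sup x y" by simp_all
    ultimately show ?thesis using RC that unfolding relatively_complemented_def by blast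
  qed
  have "(inf x x', inf (sup x y) x') \<in> T" using f(4)[OF xj f(1)] .
  hence mx': "(inf x y, x') \<in> T" using x' by (simp add: inf_absorb2)
  have "(sup (inf x y) (inf x y), sup x x') \<in> T" using f(3)[OF mx mx'] .
  thus ?thesis using x' by simp
qed

lemma tol_trans:
  assumes RC: "relatively_complemented TYPE('a::lattice)"
    and T: "tolerance (T :: ('a \<times> 'a) set)"
  shows "trans T"
proof (rule transI)
  fix x y z assume xy: "(x,y) \<in> T" and yz: "(y,z) \<in> T"
  note f = tol_facts[OF T]
  define m1 where "m1 = inf x y"
  define j1 where "j1 = sup x y"
  define m2 where "m2 = inf y z"
  define j2 where "j2 = sup y z"
  have h1: "(m1, j1) \<in> T" using tol_hull[OF RC T xy] m1_def j1_def by simp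
  have h2: "(m2, j2) \<in> T" using tol_hull[OF RC T yz] m2_def j2_def by simp
  have "m2 \<le> j1" unfolding m2_def j1_def by (meson inf_le1 order_trans sup_ge2)
  have "m1 \<le> j2" unfolding m1_def j2_def by (meson inf_le2 order_trans sup_ge1)
  have "(inf m1 m2, inf j1 m2) \<in> T" using f(4)[OF h1 f(1)] .
  hence a1: "(inf m1 m2, m2) \<in> T" using \<open>m2 \<le> j1\<close> by (simp add: inf_absorb2)
  have "m2 \<le> j2" unfolding m2_def j2_def by (meson inf_le1 order_trans sup_ge1)
  have a2: "(inf m1 m2, j2) \<in> T"
    by (rule tol_chain[OF RC T _ \<open>m2 \<le> j2\<close> a1 h2]) simp
  have "(sup m1 j2, sup j1 j2) \<in> T" using f(3)[OF h1 f(1)] .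
  hence a3: "(j2, sup j1 j2) \<in> T" using \<open>m1 \<le> j2\<close> by (simp add: sup_absorb2)
  have a4: "(inf m1 m2, sup j1 j2) \<in> T"
    by (rule tol_chain[OF RC T _ _ a2 a3]) (auto simp: \<open>m2 \<le> j2\<close> le_infI2)
  show "(x,z) \<in> T"
    by (rule tol_conv[OF T a4]) (auto simp: m1_def m2_def j1_def j2_def le_infI1 le_infI2 le_supI1 le_supI2)
qed

lemma tol_triv:
  assumes S: "simple_lattice TYPE('a::lattice)"
    and RC: "relatively_complemented TYPE('a)"
    and T: "tolerance (T :: ('a \<times> 'a) set)"
  shows "T = Id \<or> T = UNIV"
  using S tol_trans[OF RC T] T unfolding simple_lattice_def congruence_def by blast

inductive_set upol :: "('a::lattice \<Rightarrow> 'a) set" where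
  uid: "(\<lambda>x. x) \<in> upol"
| uconst: "(\<lambda>x. c) \<in> upol"
| usup: "p \<in> upol \<Longrightarrow> q \<in> upol \<Longrightarrow> (\<lambda>x. sup (p x) (q x)) \<in> upol"
| uinf: "p \<in> upol \<Longrightarrow> q \<in> upol \<Longrightarrow> (\<lambda>x. inf (p x) (q x)) \<in> upol"

inductive_set bpol :: "('a::lattice \<Rightarrow> 'a \<Rightarrow> 'a) set" where
  b1: "(\<lambda>x y. x) \<in> bpol"
| b2: "(\<lambda>x y. y) \<in> bpol"
| bconst: "(\<lambda>x y. c) \<in> bpol"
| bsup: "p \<in> bpol \<Longrightarrow> q \<in> bpol \<Longrightarrow> (\<lambda>x y. sup (p x y) (q x y)) \<in> bpol"
| binf: "p \<in> bpol \<Longrightarrow> q \<in> bpol \<Longrightarrow> (\<lambda>x y. inf (p x y) (q x y)) \<in> bpol"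

lemma upol_mono: "p \<in> upol \<Longrightarrow> x \<le> y \<Longrightarrow> p x \<le> p y"
  by (induction p rule: upol.induct) (auto intro: le_supI1 le_supI2 le_infI1 le_infI2)

lemma bpol_mono: "p \<in> bpol \<Longrightarrow> x \<le> x' \<Longrightarrow> y \<le> y' \<Longrightarrow> p x y \<le> p x' y'"
  by (induction p rule: bpol.induct) (auto intro: le_supI1 le_supI2 le_infI1 le_infI2)

lemma bpol_swap: "p \<in> bpol \<Longrightarrow> (\<lambda>x y. p y x) \<in> bpol"
  by (induction p rule: bpol.induct) (auto intro: bpol.intros)

lemma bpol_comp: "p \<in> bpol \<Longrightarrow> g \<in> upol \<Longrightarrow> h \<in> upol \<Longrightarrow> (\<lambda>s. p (g s) (h s)) \<in> upol"
  by (induction p rule: bpol.induct) (auto intro: upol.intros)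

lemma bpol_tol: "tolerance {(p a b, p b a) | p :: 'a::lattice \<Rightarrow> 'a \<Rightarrow> 'a. p \<in> bpol}"
  unfolding tolerance_def refl_on_def sym_on_def
proof (intro conjI allI impI ballI)
  fix x show "(x, x) \<in> {(p a b, p b a) |p. p \<in> bpol}"
    using bpol.bconst[of x] by (auto intro!: exI[of _ "\<lambda>_ _. x"])
next
  fix x y assume "(x, y) \<in> {(p a b, p b a) |p. p \<in> bpol}"
  then obtain p where "p \<in> bpol" "x = p a b" "y = p b a" by blast
  thus "(y, x) \<in> {(p a b, p b a) |p. p \<in> bpol}"
    using bpol_swap[of p] by (auto intro!: exI[of _ "\<lambda>x y. p y x"])
next
  fix x y c d assume "(x, y) \<in> {(p a b, p b a) |p. p \<in> bpol}"
    "(c, d) \<in> {(p a b, p b a) |p. p \<in> bpol}"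
  then obtain p q where "p \<in> bpol" "x = p a b" "y = p b a" "q \<in> bpol" "c = q a b" "d = q b a"
    by blast
  thus "(sup x c, sup y d) \<in> {(p a b, p b a) |p. p \<in> bpol}"
    using bpol.bsup[of p q] by (auto intro!: exI[of _ "\<lambda>x y. sup (p x y) (q x y)"])
  show "(inf x c, inf y d) \<in> {(p a b, p b a) |p. p \<in> bpol}"
    using bpol.binf[of p q] \<open>p \<in> bpol\<close> \<open>q \<in> bpol\<close> \<open>x = p a b\<close> \<open>y = p b a\<close>
      \<open>c = q a b\<close> \<open>d = q b a\<close> by (auto intro!: exI[of _ "\<lambda>x y. inf (p x y) (q x y)"])
qed

lemma upol_poly: "p \<in> upol \<Longrightarrow> (\<lambda>x. p (x i)) \<in> polynomials"
  by (induction p rule: upol.induct) (auto intro: polynomials.intros)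

lemma poly_mono: "p \<in> polynomials \<Longrightarrow> x \<le> y \<Longrightarrow> p x \<le> p y"
  by (induction p rule: polynomials.induct) (auto simp: le_fun_def intro: le_supI1 le_supI2 le_infI1 le_infI2)

lemma upol_meet:
  fixes F :: "'b \<Rightarrow> 'a::bounded_lattice \<Rightarrow> 'a"
  assumes "finite S" "\<forall>s\<in>S. F s \<in> upol"
  shows "\<exists>q\<in>upol. \<forall>x. (\<forall>s\<in>S. q x \<le> F s x) \<and> (\<forall>y. (\<forall>s\<in>S. y \<le> F s x) \<longrightarrow> y \<le> q x)"
  using assms
proof (induction S rule: finite_induct)
  case empty
  show ?case by (rule bexI[of _ "\<lambda>x. top"]) (auto intro: upol.intros)
next
  case (insert a S)
  then obtain q where q: "q \<in> upol" "\<forall>x. (\<forall>s\<in>S. q x \<le> F s x) \<and> (\<forall>y. (\<forall>s\<in>S. y \<le> F s x) \<longrightarrow> y \<le> q x)"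
    by auto
  show ?case
    by (rule bexI[of _ "\<lambda>x. inf (F a x) (q x)"]) (use q insert in \<open>auto intro: upol.intros le_infI2\<close>)
qed

lemma poly_meet:
  fixes F :: "'b \<Rightarrow> ('n \<Rightarrow> 'a::bounded_lattice) \<Rightarrow> 'a"
  assumes "finite S" "\<forall>s\<in>S. F s \<in> polynomials"
  shows "\<exists>q\<in>polynomials. \<forall>x. (\<forall>s\<in>S. q x \<le> F s x) \<and> (\<forall>y. (\<forall>s\<in>S. y \<le> F s x) \<longrightarrow> y \<le> q x)"
  using assms
proof (induction S rule: finite_induct)
  case empty
  show ?case by (rule bexI[of _ "\<lambda>x. top"]) (auto intro: polynomials.intros)
next
  case (insert a S)
  then obtain q where q: "q \<in> polynomials" "\<forall>x. (\<forall>s\<in>S. q x \<le> F s x) \<and> (\<forall>y. (\<forall>s\<in>S. y \<le> F s x) \<longrightarrow> y \<le> q x)"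
    by auto
  show ?case
    by (rule bexI[of _ "\<lambda>x. inf (F a x) (q x)"]) (use q insert in \<open>auto intro: polynomials.intros le_infI2\<close>)
qed

lemma poly_join:
  fixes F :: "'b \<Rightarrow> ('n \<Rightarrow> 'a::bounded_lattice) \<Rightarrow> 'a"
  assumes "finite S" "\<forall>s\<in>S. F s \<in> polynomials"
  shows "\<exists>q\<in>polynomials. \<forall>x. (\<forall>s\<in>S. F s x \<le> q x) \<and> (\<forall>y. (\<forall>s\<in>S. F s x \<le> y) \<longrightarrow> q x \<le> y)"
  using assms
proof (induction S rule: finite_induct)
  case empty
  show ?case by (rule bexI[of _ "\<lambda>x. bot"]) (auto intro: polynomials.intros)
next
  case (insert a S)
  then obtain q where q: "q \<in> polynomials" "\<forall>x. (\<forall>s\<in>S. F s x \<le> q x) \<and> (\<forall>y. (\<forall>s\<in>S. F s x \<le> y) \<longrightarrow> q x \<le> y)"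
    by auto
  show ?case
    by (rule bexI[of _ "\<lambda>x. sup (F a x) (q x)"]) (use q insert in \<open>auto intro: polynomials.intros le_supI2\<close>)
qed


lemma separate:
  assumes S: "simple_lattice TYPE('a::bounded_lattice)"
    and RC: "relatively_complemented TYPE('a)"
    and nb: "\<not> b \<le> (t::'a)"
  shows "\<exists>q\<in>upol. q b = top \<and> q t = bot"
proof -
  define m where "m = inf t b"
  define R where "R = {(p m b, p b m) | p :: 'a \<Rightarrow> 'a \<Rightarrow> 'a. p \<in> bpol}"
  have tol: "tolerance R" unfolding R_def by (rule bpol_tol)
  have "(m, b) \<in> R" unfolding R_def using bpol.b1 by (auto intro!: exI[of _ "\<lambda>x y. x"])
  moreover have "m \<noteq> b" using nb unfolding m_def by (metis inf.cobounded1)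
  ultimately have "R \<noteq> Id" by auto
  hence "R = UNIV" using tol_triv[OF S RC tol] by blast
  hence "(bot, top) \<in> R" by simp
  then obtain p where p: "p \<in> bpol" "bot = p m b" "top = p b m" unfolding R_def by blast
  define q where "q = (\<lambda>s. p (inf s b) m)"
  have "q \<in> upol" unfolding q_def
    by (rule bpol_comp[OF p(1)]) (auto intro: upol.intros)
  moreover have "q b = top" unfolding q_def using p by simp
  moreover have "q t \<le> bot"
  proof -
    have "q t = p m m" unfolding q_def m_def by simp
    also have "\<dots> \<le> p m b" using bpol_mono[OF p(1)] unfolding m_def by simp
    finally show ?thesis using p by simp
  qed
  ultimately show ?thesis using bot.extremum_uniqueI by blast
qed

lemma indicator:
  assumes S: "simple_lattice TYPE('a::{finite,bounded_lattice})"
    and RC: "relatively_complemented TYPE('a)"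
  shows "\<exists>e\<in>upol. \<forall>s. e s = (if b \<le> s then top else (bot::'a))"
proof -
  define F where "F t = (SOME q. q \<in> upol \<and> q b = top \<and> q t = bot)" for t :: 'a
  have F: "F t \<in> upol \<and> F t b = top \<and> F t t = bot" if "\<not> b \<le> t" for t
    unfolding F_def using someI_ex[OF separate[OF S RC that, unfolded Bex_def]] by blast
  obtain q where q: "q \<in> upol"
    "\<forall>x. (\<forall>s\<in>{t. \<not> b \<le> t}. q x \<le> F s x) \<and> (\<forall>y. (\<forall>s\<in>{t. \<not> b \<le> t}. y \<le> F s x) \<longrightarrow> y \<le> q x)"
  proof -
    have "\<forall>s\<in>{t. \<not> b \<le> t}. F s \<in> upol" using F by blast
    from upol_meet[OF finite this] show ?thesis using that by blast
  qed
  have "q s = (if b \<le> s then top else bot)" for s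
  proof (cases "b \<le> s")
    case True
    have "\<forall>t\<in>{t. \<not> b \<le> t}. top \<le> F t s"
    proof
      fix t assume "t \<in> {t. \<not> b \<le> t}"
      hence "F t \<in> upol" "F t b = top" using F by auto
      thus "top \<le> F t s" using upol_mono[OF _ True] by metis
    qed
    hence "top \<le> q s" using q(2) by blast
    thus ?thesis using True top.extremum_uniqueI by auto
  next
    case False
    hence "q s \<le> F s s" using q(2) by blast
    hence "q s \<le> bot" using F[OF False] by simp
    thus ?thesis using False bot.extremum_uniqueI by auto
  qed
  thus ?thesis using q(1) by blast
qed

lemma agg_poly:
  assumes S: "simple_lattice TYPE('a::{finite,bounded_lattice})"
    and RC: "relatively_complemented TYPE('a)"
    and A: "aggregation (A :: ('n::finite \<Rightarrow> 'a) \<Rightarrow> 'a)"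
  shows "A \<in> polynomials"
proof -
  have mA: "mono A" using A unfolding aggregation_def by blast
  define E where "E b = (SOME e. e \<in> upol \<and> (\<forall>s. e s = (if b \<le> s then top else (bot::'a))))" for b
  have E: "E b \<in> upol \<and> (\<forall>s. E b s = (if b \<le> s then top else bot))" for b
    unfolding E_def using someI_ex[OF indicator[OF S RC, of b, unfolded Bex_def]] by blast
  have G: "\<exists>g\<in>polynomials. \<forall>x. g x = (if a \<le> x then A a else bot)" for a :: "'n \<Rightarrow> 'a"
  proof -
    obtain q where q: "q \<in> polynomials"
      "\<forall>x. (\<forall>i\<in>UNIV. q x \<le> E (a i) (x i)) \<and> (\<forall>y. (\<forall>i\<in>UNIV. y \<le> E (a i) (x i)) \<longrightarrow> y \<le> q x)"
    proof -
      have "\<forall>i\<in>UNIV. (\<lambda>x. E (a i) (x i)) \<in> polynomials"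
      proof
        fix i show "(\<lambda>x. E (a i) (x i)) \<in> polynomials" using upol_poly[of "E (a i)" i] E by blast
      qed
      from poly_meet[OF finite this] show ?thesis using that by blast
    qed
    have qv: "q x = (if a \<le> x then top else bot)" for x
    proof (cases "a \<le> x")
      case True
      hence "\<forall>i\<in>UNIV. top \<le> E (a i) (x i)" using E by (simp add: le_fun_def)
      hence "top \<le> q x" using q(2) by blast
      thus ?thesis using True top.extremum_uniqueI by auto
    next
      case False
      then obtain i where "\<not> a i \<le> x i" by (auto simp: le_fun_def)
      have "q x \<le> E (a i) (x i)" using q(2) by blast
      hence "q x \<le> bot" using E \<open>\<not> a i \<le> x i\<close> by simp
      thus ?thesis using False bot.extremum_uniqueI by auto
    qed
    show ?thesis
    proof (rule bexI[of _ "\<lambda>x. inf (A a) (q x)"])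
      show "(\<lambda>x. inf (A a) (q x)) \<in> polynomials" using q(1) by (rule polynomials.meet[OF polynomials.const])
      show "\<forall>x. inf (A a) (q x) = (if a \<le> x then A a else bot)" using qv by simp
    qed
  qed
  define Gf where "Gf a = (SOME g. g \<in> polynomials \<and> (\<forall>x. g x = (if a \<le> x then A a else bot)))"
    for a :: "'n \<Rightarrow> 'a"
  have Gf: "Gf a \<in> polynomials \<and> (\<forall>x. Gf a x = (if a \<le> x then A a else bot))" for a
    unfolding Gf_def using someI_ex[OF G[of a, unfolded Bex_def]] by blast
  obtain q where q: "q \<in> polynomials"
    "\<forall>x. (\<forall>a\<in>UNIV. Gf a x \<le> q x) \<and> (\<forall>y. (\<forall>a\<in>UNIV. Gf a x \<le> y) \<longrightarrow> q x \<le> y)"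
  proof -
    have "\<forall>a\<in>UNIV. Gf a \<in> polynomials" using Gf by blast
    from poly_join[OF finite this] show ?thesis using that by blast
  qed
  have "q x = A x" for x
  proof (rule antisym)
    have "\<forall>a\<in>UNIV. Gf a x \<le> A x"
    proof
      fix a show "Gf a x \<le> A x" using Gf[of a] mA unfolding mono_def by auto
    qed
    thus "q x \<le> A x" using q(2) by blast
    have "Gf x x = A x" using Gf by simp
    moreover have "Gf x x \<le> q x" using q(2) by blast
    ultimately show "A x \<le> q x" by simp
  qed
  hence "q = A" by auto
  thus ?thesis using q(1) by simp
qed

lemma poly_agg:
  assumes "p \<in> Pol01"
  shows "aggregation (p :: ('n::finite \<Rightarrow> 'a::bounded_lattice) \<Rightarrow> 'a)"
  using assms poly_mono unfolding Pol01_def aggregation_def mono_def by blast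

theorem mainTheorem6:
  assumes "simple_lattice TYPE('a::{finite, bounded_lattice})"
    and "relatively_complemented TYPE('a)"
  shows "(\<forall>T :: ('a \<times> 'a) set. tolerance T \<longrightarrow> trans T)
    \<and> (\<forall>T :: ('a \<times> 'a) set. tolerance T \<longrightarrow> T = Id \<or> T = UNIV)
    \<and> {A :: ('n::finite \<Rightarrow> 'a) \<Rightarrow> 'a. aggregation A} = Pol01"
proof (intro conjI allI impI)
  fix T :: "('a \<times> 'a) set" assume "tolerance T"
  thus "trans T" using tol_trans[OF assms(2)] by blast
next
  fix T :: "('a \<times> 'a) set" assume "tolerance T"
  thus "T = Id \<or> T = UNIV" using tol_triv[OF assms] by blast
next
  show "{A :: ('n::finite \<Rightarrow> 'a) \<Rightarrow> 'a. aggregation A} = Pol01"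
  proof (rule set_eqI, rule iffI)
    fix A :: "('n \<Rightarrow> 'a) \<Rightarrow> 'a" assume "A \<in> {A. aggregation A}"
    hence ag: "aggregation A" by simp
    thus "A \<in> Pol01" using agg_poly[OF assms ag] unfolding Pol01_def aggregation_def by blast
  next
    fix A :: "('n \<Rightarrow> 'a) \<Rightarrow> 'a" assume "A \<in> Pol01"
    thus "A \<in> {A. aggregation A}" using poly_agg by blast
  qed
qed

end
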